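(* Let $\tau\in[0,1]$ and suppose the decision tree $T$ is everywhere $\tau$-influential with respect to $f:\{0,1\}^n\to\{0,1\}$. Then for every $i\in[n]$, $\mathrm{Inf}_i[f]\ge\tau\cdot\delta_i(T)$.
   Context: $\mathrm{Inf}_i[g]=\Pr_{x\sim\{0,1\}^n}[g(x)\ne g(x^{\oplus i})]$ for uniform $x$. For an internal node $v$ of $T$, $\mathrm{ind}(v)$ is the index of the variable queried at $v$, and $f_v$ is the restriction of $f$ induced by the root-to-$v$ path. $T$ is everywhere $\tau$-influential w.r.t. $f$ if $\mathrm{Inf}_{\mathrm{ind}(v)}[f_v]\ge\tau$ for every internal node $v$. $\delta_i(T)=\Pr_{x\sim\{0,1\}^n}[T\text{ queries }x_i\text{ on input }x]$. *)

theory Defs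
  imports Complex_Main
begin

text \<open>Points of the cube {0,1}^n: functions nat => bool, variables indexed 0..n-1,
  with all coordinates >= n fixed to False.\<close>
definition cube :: "nat \<Rightarrow> (nat \<Rightarrow> bool) set" where
  "cube n = {x. \<forall>j\<ge>n. \<not> x j}"

definition flip :: "(nat \<Rightarrow> bool) \<Rightarrow> nat \<Rightarrow> (nat \<Rightarrow> bool)" where
  "flip x i = x(i := \<not> x i)"

definition prob_cube :: "nat \<Rightarrow> ((nat \<Rightarrow> bool) \<Rightarrow> bool) \<Rightarrow> real" where
  "prob_cube n P = real (card {x \<in> cube n. P x}) / 2 ^ n"

definition Inf :: "nat \<Rightarrow> nat \<Rightarrow> ((nat \<Rightarrow> bool) \<Rightarrow> bool) \<Rightarrow> real" where
  "Inf n i g = prob_cube n (\<lambda>x. g x \<noteq> g (flip x i))"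

text \<open>Decision trees: Node i l r queries x_i, goes to l if x_i = 0 (False), r if x_i = 1.\<close>
datatype dtree = Leaf bool | Node nat dtree dtree

fun queried_vars :: "dtree \<Rightarrow> nat set" where
  "queried_vars (Leaf b) = {}"
| "queried_vars (Node j l r) = insert j (queried_vars l \<union> queried_vars r)"

fun queries :: "dtree \<Rightarrow> (nat \<Rightarrow> bool) \<Rightarrow> nat \<Rightarrow> bool" where
  "queries (Leaf b) x i = False"
| "queries (Node j l r) x i = (j = i \<or> (if x j then queries r x i else queries l x i))"

definition delta :: "nat \<Rightarrow> dtree \<Rightarrow> nat \<Rightarrow> real" where
  "delta n T i = prob_cube n (\<lambda>x. queries T x i)"

definition restrict_fn :: "((nat \<Rightarrow> bool) \<Rightarrow> bool) \<Rightarrow> (nat \<Rightarrow> bool option) \<Rightarrow> (nat \<Rightarrow> bool) \<Rightarrow> bool" where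
  "restrict_fn f \<rho> x = f (\<lambda>k. case \<rho> k of None \<Rightarrow> x k | Some b \<Rightarrow> b)"

text \<open>Everywhere tau-influential, where rho is the restriction accumulated along the root-to-node path.\<close>
fun everywhere_infl_aux :: "nat \<Rightarrow> real \<Rightarrow> ((nat \<Rightarrow> bool) \<Rightarrow> bool) \<Rightarrow> (nat \<Rightarrow> bool option) \<Rightarrow> dtree \<Rightarrow> bool" where
  "everywhere_infl_aux n \<tau> f \<rho> (Leaf b) = True"
| "everywhere_infl_aux n \<tau> f \<rho> (Node j l r) =
     (Inf n j (restrict_fn f \<rho>) \<ge> \<tau>
      \<and> everywhere_infl_aux n \<tau> f (\<rho>(j := Some False)) l
      \<and> everywhere_infl_aux n \<tau> f (\<rho>(j := Some True)) r)"

definition everywhere_infl :: "nat \<Rightarrow> real \<Rightarrow> ((nat \<Rightarrow> bool) \<Rightarrow> bool) \<Rightarrow> dtree \<Rightarrow> bool" where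
  "everywhere_infl n \<tau> f T = everywhere_infl_aux n \<tau> f (\<lambda>_. None) T"

end

theory Submission
  imports Defs
begin

definition S :: "nat \<Rightarrow> ((nat \<Rightarrow> bool) \<Rightarrow> bool) \<Rightarrow> real" where
  "S n P = (\<Sum>x\<in>cube n. if P x then 1 else 0)"

definition rx :: "(nat \<Rightarrow> bool option) \<Rightarrow> (nat \<Rightarrow> bool) \<Rightarrow> (nat \<Rightarrow> bool)" where
  "rx \<rho> x = (\<lambda>k. case \<rho> k of None \<Rightarrow> x k | Some b \<Rightarrow> b)"

lemma cube_image: "cube n = (\<lambda>A k. k \<in> A) ` Pow {..<n}"
proof
  show "cube n \<subseteq> (\<lambda>A k. k \<in> A) ` Pow {..<n}"
  proof
    fix x assume "x \<in> cube n"
    then have "{k. x k} \<in> Pow {..<n}" unfolding cube_def by (auto simp: not_less[symmetric])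
    moreover have "x = (\<lambda>k. k \<in> {k. x k})" by auto
    ultimately show "x \<in> (\<lambda>A k. k \<in> A) ` Pow {..<n}" by blast
  qed
  show "(\<lambda>A k. k \<in> A) ` Pow {..<n} \<subseteq> cube n" unfolding cube_def by auto
qed

lemma finite_cube: "finite (cube n)"
  unfolding cube_image by simp

lemma card_cube: "card (cube n) = 2 ^ n"
proof -
  have "inj_on (\<lambda>A k. k \<in> A) (Pow {..<n})"
    by (rule inj_onI) (metis Collect_mem_eq)
  then show ?thesis unfolding cube_image by (simp add: card_image card_Pow)
qed

lemma prob_S: "prob_cube n P = S n P / 2 ^ n"
proof -
  have e: "{x \<in> cube n. P x} = cube n \<inter> Collect P" by auto
  show ?thesis unfolding prob_cube_def S_def by (simp add: sum.If_cases finite_cube e)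
qed

lemma S_le: "S n P \<le> 2 ^ n"
proof -
  have "S n P \<le> (\<Sum>x\<in>cube n. 1)" unfolding S_def by (rule sum_mono) auto
  also have "\<dots> = 2 ^ n" by (simp add: card_cube)
  finally show ?thesis .
qed

lemma flip_cube: "j < n \<Longrightarrow> x \<in> cube n \<Longrightarrow> flip x j \<in> cube n"
  unfolding cube_def flip_def by auto

lemma upd_cube: "j < n \<Longrightarrow> x \<in> cube n \<Longrightarrow> x(j := b) \<in> cube n"
  unfolding cube_def by auto

lemma flip_flip: "flip (flip a j) j = a"
  by (simp add: flip_def)

lemma split_sum:
  fixes h :: "(nat \<Rightarrow> bool) \<Rightarrow> real"
  assumes "j < n"
  shows "(\<Sum>x\<in>cube n. h (x(j := False))) + (\<Sum>x\<in>cube n. h (x(j := True))) = 2 * (\<Sum>x\<in>cube n. h x)"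
proof -
  have pw: "h (x(j := False)) + h (x(j := True)) = h x + h (flip x j)" for x
    unfolding flip_def by (cases "x j") (auto simp: fun_upd_idem)
  have bij: "(\<Sum>x\<in>cube n. h (flip x j)) = (\<Sum>x\<in>cube n. h x)"
  proof (rule sum.reindex_bij_witness[where i="\<lambda>x. flip x j" and j="\<lambda>x. flip x j"])
  qed (simp_all add: flip_flip flip_cube[OF assms])
  have "(\<Sum>x\<in>cube n. h (x(j := False))) + (\<Sum>x\<in>cube n. h (x(j := True)))
      = (\<Sum>x\<in>cube n. h x + h (flip x j))" by (simp add: sum.distrib[symmetric] pw)
  also have "\<dots> = 2 * (\<Sum>x\<in>cube n. h x)" by (simp add: sum.distrib bij)
  finally show ?thesis .
qed

lemma S_split:
  assumes "j < n"
  shows "S n P = (S n (\<lambda>x. P (x(j := False))) + S n (\<lambda>x. P (x(j := True)))) / 2"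
  using split_sum[OF assms, of "\<lambda>x. if P x then 1 else 0"] unfolding S_def by simp

lemma rx_upd: "\<rho> j = None \<Longrightarrow> rx \<rho> (x(j := b)) = rx (\<rho>(j := Some b)) x"
  unfolding rx_def by (auto simp: fun_eq_iff split: option.splits)

lemma rx_at: "rx (\<rho>(j := Some b)) x j = b"
  unfolding rx_def by simp

lemma restrict_rx: "restrict_fn f \<rho> x = f (rx \<rho> x)"
  unfolding restrict_fn_def rx_def by simp

lemma flip_upd: "j \<noteq> i \<Longrightarrow> flip (x(j := b)) i = (flip x i)(j := b)"
  unfolding flip_def by (auto simp: fun_eq_iff)

lemma main_ind:
  assumes "0 \<le> \<tau>"
  shows "queried_vars T \<subseteq> {..<n} \<Longrightarrow> \<rho> i = None \<Longrightarrow> everywhere_infl_aux n \<tau> f \<rho> T \<Longrightarrow>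
    \<tau> * S n (\<lambda>x. queries T (rx \<rho> x) i)
      \<le> S n (\<lambda>x. restrict_fn f \<rho> x \<noteq> restrict_fn f \<rho> (flip x i))"
proof (induction T arbitrary: \<rho>)
  case (Leaf b)
  have "0 \<le> S n (\<lambda>x. restrict_fn f \<rho> x \<noteq> restrict_fn f \<rho> (flip x i))"
    unfolding S_def by (rule sum_nonneg) auto
  then show ?case by (simp add: S_def)
next
  case (Node j l r)
  have jn: "j < n" using Node.prems(1) by auto
  show ?case
  proof (cases "\<rho> j")
    case (Some c)
    then have ji: "j \<noteq> i" using Node.prems(2) by auto
    have rxj: "rx \<rho> x j = c" for x using Some by (simp add: rx_def)
    have eq: "\<rho>(j := Some c) = \<rho>" using Some by auto
    show ?thesis
    proof (cases c)
      case True
      have "everywhere_infl_aux n \<tau> f \<rho> r" using Node.prems(3) eq True by simp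
      then have "\<tau> * S n (\<lambda>x. queries r (rx \<rho> x) i)
        \<le> S n (\<lambda>x. restrict_fn f \<rho> x \<noteq> restrict_fn f \<rho> (flip x i))"
        using Node.IH(2) Node.prems by auto
      then show ?thesis using rxj True ji by simp
    next
      case False
      have "everywhere_infl_aux n \<tau> f \<rho> l" using Node.prems(3) eq False by simp
      then have "\<tau> * S n (\<lambda>x. queries l (rx \<rho> x) i)
        \<le> S n (\<lambda>x. restrict_fn f \<rho> x \<noteq> restrict_fn f \<rho> (flip x i))"
        using Node.IH(1) Node.prems by auto
      then show ?thesis using rxj False ji by simp
    qed
  next
    case None
    show ?thesis
    proof (cases "j = i")
      case True
      have "\<tau> \<le> Inf n j (restrict_fn f \<rho>)" using Node.prems(3) by simp
      then have "\<tau> * 2 ^ n \<le> S n (\<lambda>x. restrict_fn f \<rho> x \<noteq> restrict_fn f \<rho> (flip x i))"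
        using True unfolding Inf_def prob_S by (simp add: field_simps)
      moreover have "\<tau> * S n (\<lambda>x. queries (Node j l r) (rx \<rho> x) i) \<le> \<tau> * 2 ^ n"
        using assms S_le by (simp add: mult_left_mono)
      ultimately show ?thesis by linarith
    next
      case False
      define \<rho>F where "\<rho>F = \<rho>(j := Some False)"
      define \<rho>T where "\<rho>T = \<rho>(j := Some True)"
      have hF: "\<tau> * S n (\<lambda>x. queries l (rx \<rho>F x) i)
        \<le> S n (\<lambda>x. restrict_fn f \<rho>F x \<noteq> restrict_fn f \<rho>F (flip x i))"
      proof -
        have a1: "queried_vars l \<subseteq> {..<n}" using Node.prems(1) by simp
        have a2: "\<rho>F i = None" using Node.prems(2) False unfolding \<rho>F_def by simp
        have a3: "everywhere_infl_aux n \<tau> f \<rho>F l" using Node.prems(3) unfolding \<rho>F_def by simp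
        show ?thesis by (rule Node.IH(1)[OF a1 a2 a3])
      qed
      have hT: "\<tau> * S n (\<lambda>x. queries r (rx \<rho>T x) i)
        \<le> S n (\<lambda>x. restrict_fn f \<rho>T x \<noteq> restrict_fn f \<rho>T (flip x i))"
      proof -
        have a1: "queried_vars r \<subseteq> {..<n}" using Node.prems(1) by simp
        have a2: "\<rho>T i = None" using Node.prems(2) False unfolding \<rho>T_def by simp
        have a3: "everywhere_infl_aux n \<tau> f \<rho>T r" using Node.prems(3) unfolding \<rho>T_def by simp
        show ?thesis by (rule Node.IH(2)[OF a1 a2 a3])
      qed
      have q: "S n (\<lambda>x. queries (Node j l r) (rx \<rho> x) i)
        = (S n (\<lambda>x. queries l (rx \<rho>F x) i) + S n (\<lambda>x. queries r (rx \<rho>T x) i)) / 2"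
      proof -
        have e1: "queries (Node j l r) (rx \<rho> (x(j := False))) i = queries l (rx \<rho>F x) i" for x
          using False None unfolding \<rho>F_def by (simp only: rx_upd[of \<rho> j, OF None] rx_at queries.simps if_False if_True simp_thms)
        have e2: "queries (Node j l r) (rx \<rho> (x(j := True))) i = queries r (rx \<rho>T x) i" for x
          using False None unfolding \<rho>T_def by (simp only: rx_upd[of \<rho> j, OF None] rx_at queries.simps if_False if_True simp_thms)
        show ?thesis by (subst S_split[OF jn]) (simp only: e1 e2)
      qed
      have p: "S n (\<lambda>x. restrict_fn f \<rho> x \<noteq> restrict_fn f \<rho> (flip x i))
        = (S n (\<lambda>x. restrict_fn f \<rho>F x \<noteq> restrict_fn f \<rho>F (flip x i))
           + S n (\<lambda>x. restrict_fn f \<rho>T x \<noteq> restrict_fn f \<rho>T (flip x i))) / 2"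
      proof -
        have e: "(restrict_fn f \<rho> (x(j := b)) \<noteq> restrict_fn f \<rho> (flip (x(j := b)) i))
           = (restrict_fn f (\<rho>(j := Some b)) x \<noteq> restrict_fn f (\<rho>(j := Some b)) (flip x i))" for x b
          using False None by (simp only: restrict_rx flip_upd[OF False] rx_upd[of \<rho> j, OF None])
        show ?thesis unfolding \<rho>F_def \<rho>T_def by (subst S_split[OF jn]) (simp only: e)
      qed
      have d: "\<tau> * ((A + B) / 2) = (\<tau> * A + \<tau> * B) / 2" for A B :: real
        by (simp add: ring_distribs)
      show ?thesis unfolding q p d by (rule divide_right_mono[OF add_mono[OF hF hT]]) simp
    qed
  qed
qed

theorem mainTheorem9:
  fixes n :: nat and \<tau> :: real and f :: "(nat \<Rightarrow> bool) \<Rightarrow> bool" and T :: dtree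
  assumes "0 \<le> \<tau>" and "\<tau> \<le> 1"
    and "queried_vars T \<subseteq> {..<n}"
    and "everywhere_infl n \<tau> f T"
  shows "\<forall>i<n. Inf n i f \<ge> \<tau> * delta n T i"
proof (intro allI impI)
  fix i assume "i < n"
  have r0: "rx (\<lambda>_. None) x = x" for x by (simp add: rx_def)
  have f0: "restrict_fn f (\<lambda>_. None) = f" by (simp add: restrict_fn_def fun_eq_iff)
  have "\<tau> * S n (\<lambda>x. queries T x i) \<le> S n (\<lambda>x. f x \<noteq> f (flip x i))"
    using main_ind[OF assms(1) assms(3), of "\<lambda>_. None" i f] assms(4)
    unfolding everywhere_infl_def by (simp add: r0 f0)
  then show "Inf n i f \<ge> \<tau> * delta n T i"
    unfolding Inf_def delta_def prob_S by (simp add: divide_right_mono)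
qed

end
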